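(* Let $G$ be an ordered graph and let $H$ be a spanning subgraph of $G$ (with the orders inherited from $G$). Then for every edge $e\in E(H)$ we have $\mathrm{ht}_H(e)\preceq_{\mathrm{lex}}\mathrm{ht}_G(e)$.
   Context: An ordered graph is a finite simple graph $G$ equipped with a total order $\le_G$ on $E(G)$ and a total order $\le^V_G$ on $V(G)$. Let $\mathbb N=\{1,2,\dots\}$. Define $\preceq_{\mathrm{lex}}$ on $\mathbb N\times V(G)$ by $(i,v)\preceq_{\mathrm{lex}}(i',v')$ iff $i<i'$, or $i=i'$ and $v\le^V_G v'$. The height table $\mathrm{HT}(G)$ is a partially filled array indexed by $\mathbb N\times V(G)$, built by going through all $(i,v)$ in $\preceq_{\mathrm{lex}}$-increasing order and setting the entry at $(i,v)$ to be the $\le_G$-largest edge containing $v$ not yet entered into the table (blank if none remain). Every edge is entered exactly once; $\mathrm{ht}_G(e)$ denotes the position (row, column) of $e$ in $\mathrm{HT}(G)$. *)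

theory Defs
  imports Main
begin

text \<open>The vertex order is the linear order of the vertex type 'v; the edge order is a
  relation r (as a set of pairs) which must be a linear order on E.\<close>

definition simple_graph :: "'v set \<Rightarrow> 'v set set \<Rightarrow> bool" where
  "simple_graph V E \<longleftrightarrow> finite V \<and> (\<forall>e\<in>E. \<exists>u w. u \<in> V \<and> w \<in> V \<and> u \<noteq> w \<and> e = {u, w})"

definition lex_le :: "nat \<times> 'v::linorder \<Rightarrow> nat \<times> 'v \<Rightarrow> bool" where
  "lex_le p q \<longleftrightarrow> fst p < fst q \<or> (fst p = fst q \<and> snd p \<le> snd q)"

definition max_edge :: "('v set \<times> 'v set) set \<Rightarrow> 'v set set \<Rightarrow> 'v \<Rightarrow> 'v set" where
  "max_edge r R v = (THE e. e \<in> R \<and> v \<in> e \<and> (\<forall>f\<in>R. v \<in> f \<longrightarrow> (f, e) \<in> r))"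

text \<open>Filling row i of the height table: go through the vertices in order; R is the set of
  edges not yet entered, P records the position of each entered edge.\<close>
fun ht_row :: "('v set \<times> 'v set) set \<Rightarrow> nat \<Rightarrow> 'v list \<Rightarrow> 'v set set \<Rightarrow> ('v set \<Rightarrow> (nat \<times> 'v) option)
    \<Rightarrow> 'v set set \<times> ('v set \<Rightarrow> (nat \<times> 'v) option)" where
  "ht_row r i [] R P = (R, P)"
| "ht_row r i (v # vs) R P =
     (if \<exists>e\<in>R. v \<in> e
      then (let e = max_edge r R v in ht_row r i vs (R - {e}) (P(e \<mapsto> (i, v))))
      else ht_row r i vs R P)"

fun ht_rows :: "('v set \<times> 'v set) set \<Rightarrow> 'v list \<Rightarrow> nat \<Rightarrow> 'v set set \<Rightarrow> ('v set \<Rightarrow> (nat \<times> 'v) option)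
    \<Rightarrow> 'v set set \<times> ('v set \<Rightarrow> (nat \<times> 'v) option)" where
  "ht_rows r vs 0 R P = (R, P)"
| "ht_rows r vs (Suc n) R P = (case ht_rows r vs n R P of (R', P') \<Rightarrow> ht_row r (Suc n) vs R' P')"

text \<open>Position of edge e in the height table HT(G) of G = (V, E) with edge order r.
  Every row with remaining edges enters at least one edge, so card E rows suffice;
  all later rows are blank.\<close>
definition ht :: "'v::linorder set \<Rightarrow> 'v set set \<Rightarrow> ('v set \<times> 'v set) set \<Rightarrow> 'v set \<Rightarrow> nat \<times> 'v" where
  "ht V E r e = the (snd (ht_rows r (sorted_list_of_set V) (card E) E Map.empty) e)"

end

theory Submission
  imports Defs
begin

lemma lin_props:
  assumes "linear_order_on E r"
  shows "\<And>x. x \<in> E \<Longrightarrow> (x,x) \<in> r" "trans r" "antisym r"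
    "\<And>x y. x \<in> E \<Longrightarrow> y \<in> E \<Longrightarrow> x \<noteq> y \<Longrightarrow> (x,y) \<in> r \<or> (y,x) \<in> r"
  using assms unfolding linear_order_on_def partial_order_on_def preorder_on_def refl_on_def total_on_def
  by auto

lemma exists_max:
  assumes "linear_order_on E r" "finite S" "S \<noteq> {}" "S \<subseteq> E"
  shows "\<exists>m\<in>S. \<forall>f\<in>S. (f,m) \<in> r"
  using assms(2,3,4)
proof (induction S rule: finite_ne_induct)
  case (singleton x)
  then show ?case using lin_props(1)[OF assms(1)] by auto
next
  case (insert x F)
  then obtain m where m: "m \<in> F" "\<forall>f\<in>F. (f,m) \<in> r" by auto
  show ?case
  proof (cases "(x,m) \<in> r")
    case True
    then show ?thesis using m by auto
  next
    case False
    then have "x \<noteq> m" using lin_props(1)[OF assms(1)] insert by auto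
    then have "(m,x) \<in> r" using False lin_props(4)[OF assms(1), of x m] insert m by auto
    then have "\<forall>f\<in>insert x F. (f,x) \<in> r"
      using m lin_props(1)[OF assms(1)] lin_props(2)[OF assms(1)] insert
      by (auto dest: transD)
    then show ?thesis by auto
  qed
qed

lemma max_edge_unique:
  assumes "linear_order_on E r" "R \<subseteq> E" "m \<in> R" "v \<in> m" "\<forall>f\<in>R. v \<in> f \<longrightarrow> (f,m) \<in> r"
  shows "max_edge r R v = m"
  unfolding max_edge_def
proof (rule the_equality)
  show "m \<in> R \<and> v \<in> m \<and> (\<forall>f\<in>R. v \<in> f \<longrightarrow> (f, m) \<in> r)" using assms by auto
next
  fix e assume "e \<in> R \<and> v \<in> e \<and> (\<forall>f\<in>R. v \<in> f \<longrightarrow> (f, e) \<in> r)"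
  then show "e = m" using assms lin_props(3)[OF assms(1)] by (auto dest: antisymD)
qed

lemma max_edge_props:
  assumes "linear_order_on E r" "finite E" "R \<subseteq> E" "\<exists>e\<in>R. v \<in> e"
  shows "max_edge r R v \<in> R \<and> v \<in> max_edge r R v \<and> (\<forall>f\<in>R. v \<in> f \<longrightarrow> (f, max_edge r R v) \<in> r)"
proof -
  have "finite {f\<in>R. v \<in> f}" using assms(2,3) finite_subset by (metis (no_types, lifting) mem_Collect_eq subsetI subset_eq)
  then obtain m where m: "m \<in> {f\<in>R. v \<in> f}" "\<forall>f\<in>{f\<in>R. v \<in> f}. (f,m) \<in> r"
    using exists_max[OF assms(1), of "{f\<in>R. v \<in> f}"] assms(3,4) by auto
  then have "max_edge r R v = m" using max_edge_unique[OF assms(1,3)] by auto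
  then show ?thesis using m by auto
qed

lemma ht_row_empty: "ht_row r i vs {} P = ({}, P)"
  by (induction vs arbitrary: P) auto

lemma ht_row_mono: "fst (ht_row r i vs R P) \<subseteq> R"
proof (induction vs arbitrary: R P)
  case Nil then show ?case by simp
next
  case (Cons v vs)
  have "fst (ht_row r i vs (R - {max_edge r R v}) (P(max_edge r R v \<mapsto> (i, v)))) \<subseteq> R"
    using Cons[of "R - {max_edge r R v}"] by blast
  moreover have "fst (ht_row r i vs R P) \<subseteq> R" using Cons by blast
  ultimately show ?case by (simp add: Let_def)
qed

lemma ht_rows_mono: "fst (ht_rows r vs n R P) \<subseteq> R"
proof (induction n)
  case 0 then show ?case by simp
next
  case (Suc n)
  obtain R' P' where eq: "ht_rows r vs n R P = (R', P')" by force
  then show ?case using Suc ht_row_mono[of r "Suc n" vs R' P'] by simp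
qed

lemma ht_row_strict:
  assumes "linear_order_on E r" "finite E" "R \<subseteq> E" "\<exists>e\<in>R. e \<inter> set vs \<noteq> {}"
  shows "fst (ht_row r i vs R P) \<subset> R"
  using assms(3,4)
proof (induction vs arbitrary: R P)
  case Nil then show ?case by simp
next
  case (Cons v vs)
  show ?case
  proof (cases "\<exists>e\<in>R. v \<in> e")
    case True
    have "max_edge r R v \<in> R" using max_edge_props[OF assms(1,2) Cons(2) True] by auto
    then show ?thesis using True ht_row_mono[of r i vs "R - {max_edge r R v}"] by (auto simp: Let_def)
  next
    case False
    then have "\<exists>e\<in>R. e \<inter> set vs \<noteq> {}" using Cons(3) by auto
    then show ?thesis using Cons False by auto
  qed
qed

lemma ht_rows_progress:
  assumes "linear_order_on E r" "finite E" "R \<subseteq> E" "\<forall>e\<in>R. e \<inter> set vs \<noteq> {}"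
  shows "fst (ht_rows r vs n R P) = {} \<or> card (fst (ht_rows r vs n R P)) + n \<le> card R"
proof (induction n)
  case 0 then show ?case by simp
next
  case (Suc n)
  obtain R' P' where eq: "ht_rows r vs n R P = (R', P')" by force
  have sub: "R' \<subseteq> R" using ht_rows_mono[of r vs n R P] eq by simp
  show ?case
  proof (cases "R' = {}")
    case True
    have "ht_rows r vs (Suc n) R P = ht_row r (Suc n) vs {} P'" using eq True by simp
    then have "fst (ht_rows r vs (Suc n) R P) = {}" by (simp only: ht_row_empty fst_conv)
    then show ?thesis by blast
  next
    case False
    then have "\<exists>e\<in>R'. e \<inter> set vs \<noteq> {}" using sub assms(4) by auto
    moreover have "R' \<subseteq> E" using sub assms(3) by blast
    ultimately have ps: "fst (ht_row r (Suc n) vs R' P') \<subset> R'"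
      using ht_row_strict[OF assms(1,2), of R' vs "Suc n" P'] by simp
    have fin: "finite R'" using finite_subset[OF \<open>R' \<subseteq> E\<close> assms(2)] .
    have "card (fst (ht_row r (Suc n) vs R' P')) < card R'" using psubset_card_mono[OF fin ps] .
    then show ?thesis using Suc eq False by simp
  qed
qed

lemma ht_rows_done:
  assumes "linear_order_on E r" "finite E" "R \<subseteq> E" "\<forall>e\<in>R. e \<inter> set vs \<noteq> {}"
  shows "fst (ht_rows r vs (card R) R P) = {}"
proof -
  have fin: "finite R" using finite_subset[OF assms(3,2)] .
  have "finite (fst (ht_rows r vs (card R) R P))" using finite_subset[OF ht_rows_mono fin] .
  moreover have "fst (ht_rows r vs (card R) R P) = {} \<or> card (fst (ht_rows r vs (card R) R P)) + card R \<le> card R"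
    using ht_rows_progress[OF assms, of "card R" P] .
  ultimately show ?thesis by (metis add_le_same_cancel2 card_0_eq le_zero_eq)
qed

lemma ht_rows_stable:
  assumes "fst (ht_rows r vs m R P) = {}" "m \<le> n"
  shows "ht_rows r vs n R P = ht_rows r vs m R P"
  using assms(2)
proof (induction n rule: dec_induct)
  case base then show ?case by simp
next
  case (step n)
  then show ?case using assms(1) ht_row_empty
    by (metis (no_types, lifting) case_prod_conv ht_rows.simps(2) prod.collapse)
qed

lemma max_edge_restrict:
  assumes "R \<subseteq> EH"
  shows "max_edge (r \<inter> (EH \<times> EH)) R v = max_edge r R v"
proof -
  have "\<And>e. (e \<in> R \<and> v \<in> e \<and> (\<forall>f\<in>R. v \<in> f \<longrightarrow> (f, e) \<in> r \<inter> (EH \<times> EH))) =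
             (e \<in> R \<and> v \<in> e \<and> (\<forall>f\<in>R. v \<in> f \<longrightarrow> (f, e) \<in> r))"
    using assms by blast
  then show ?thesis unfolding max_edge_def by simp
qed

lemma ht_row_restrict:
  "R \<subseteq> EH \<Longrightarrow> ht_row (r \<inter> (EH \<times> EH)) i vs R P = ht_row r i vs R P"
proof (induction vs arbitrary: R P)
  case Nil then show ?case by simp
next
  case (Cons v vs)
  have "R - {max_edge r R v} \<subseteq> EH" using Cons by auto
  then have "ht_row (r \<inter> (EH \<times> EH)) i vs (R - {max_edge r R v}) (P(max_edge r R v \<mapsto> (i, v)))
     = ht_row r i vs (R - {max_edge r R v}) (P(max_edge r R v \<mapsto> (i, v)))" using Cons(1) by blast
  moreover have "ht_row (r \<inter> (EH \<times> EH)) i vs R P = ht_row r i vs R P" using Cons by blast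
  ultimately show ?case by (simp only: ht_row.simps Let_def max_edge_restrict[OF Cons(2)])
qed

lemma ht_rows_restrict:
  "R \<subseteq> EH \<Longrightarrow> ht_rows (r \<inter> (EH \<times> EH)) vs n R P = ht_rows r vs n R P"
proof (induction n)
  case 0 then show ?case by simp
next
  case (Suc n)
  obtain R' P' where eq: "ht_rows r vs n R P = (R', P')" by force
  have "R' \<subseteq> EH" using ht_rows_mono[of r vs n R P] eq Suc by auto
  then show ?case using Suc eq ht_row_restrict by simp
qed

definition Inv :: "'v set set \<Rightarrow> 'v set set \<Rightarrow> nat \<times> 'v::linorder \<Rightarrow>
   'v set set \<times> ('v set \<Rightarrow> (nat \<times> 'v) option) \<Rightarrow> 'v set set \<times> ('v set \<Rightarrow> (nat \<times> 'v) option) \<Rightarrow> bool" where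
  "Inv E EH c SG SH \<longleftrightarrow> fst SG \<subseteq> E \<and> fst SH \<subseteq> fst SG \<and> fst SH \<subseteq> EH \<and>
     (\<forall>f\<in>EH. f \<notin> fst SG \<longrightarrow> (\<exists>p q. snd SG f = Some p \<and> snd SH f = Some q \<and> lex_le q p)) \<and>
     (\<forall>f\<in>EH. f \<notin> fst SH \<longrightarrow> (\<exists>q. snd SH f = Some q \<and> lex_le q c))"

definition stp :: "('v set \<times> 'v set) set \<Rightarrow> nat \<Rightarrow> 'v \<Rightarrow>
   'v set set \<times> ('v set \<Rightarrow> (nat \<times> 'v) option) \<Rightarrow> 'v set set \<times> ('v set \<Rightarrow> (nat \<times> 'v) option)" where
  "stp r i v S = (if \<exists>e\<in>fst S. v \<in> e then (fst S - {max_edge r (fst S) v}, (snd S)(max_edge r (fst S) v \<mapsto> (i, v))) else S)"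

lemma ht_row_Cons: "ht_row r i (v # vs) R P = (case stp r i v (R, P) of (R', P') \<Rightarrow> ht_row r i vs R' P')"
  by (simp add: stp_def Let_def)

lemma lex_le_trans: "lex_le a b \<Longrightarrow> lex_le b c \<Longrightarrow> lex_le a c"
  unfolding lex_le_def by auto

lemma lex_le_refl: "lex_le a a"
  unfolding lex_le_def by auto

lemma stp_inv:
  assumes lin: "linear_order_on E r" and fin: "finite E" and EH: "EH \<subseteq> E"
    and I: "Inv E EH c (RG, PG) (RH, PH)" and cp: "lex_le c (i, v)"
  shows "Inv E EH (i, v) (stp r i v (RG, PG)) (stp r i v (RH, PH))"
proof -
  have I1: "RG \<subseteq> E" "RH \<subseteq> RG" "RH \<subseteq> EH"
    and I2: "\<forall>f\<in>EH. f \<notin> RG \<longrightarrow> (\<exists>p q. PG f = Some p \<and> PH f = Some q \<and> lex_le q p)"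
    and I3: "\<forall>f\<in>EH. f \<notin> RH \<longrightarrow> (\<exists>q. PH f = Some q \<and> lex_le q c)"
    using I unfolding Inv_def by auto
  have I3': "\<forall>f\<in>EH. f \<notin> RH \<longrightarrow> (\<exists>q. PH f = Some q \<and> lex_le q (i,v))"
    using I3 cp lex_le_trans by blast
  show ?thesis
  proof (cases "\<exists>e\<in>RG. v \<in> e")
    case False
    then have F2: "\<not> (\<exists>e\<in>RH. v \<in> e)" using I1 by auto
    show ?thesis using False F2 I1 I2 I3' unfolding Inv_def stp_def by simp
  next
    case True
    define g where "g = max_edge r RG v"
    have g: "g \<in> RG" "v \<in> g" "\<forall>f\<in>RG. v \<in> f \<longrightarrow> (f, g) \<in> r"
      using max_edge_props[OF lin fin I1(1) True] unfolding g_def by auto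
    have sG: "stp r i v (RG, PG) = (RG - {g}, PG(g \<mapsto> (i,v)))"
      using True unfolding stp_def g_def by simp
    show ?thesis
    proof (cases "g \<in> RH")
      case True
      have "max_edge r RH v = g"
        using max_edge_unique[OF lin _ True g(2)] I1 g(3) by auto
      then have sH: "stp r i v (RH, PH) = (RH - {g}, PH(g \<mapsto> (i,v)))"
        using True g(2) unfolding stp_def by auto
      show ?thesis unfolding sG sH Inv_def using I1 I2 I3' lex_le_refl by auto
    next
      case False
      show ?thesis
      proof (cases "\<exists>e\<in>RH. v \<in> e")
        case TH: True
        define h where "h = max_edge r RH v"
        have h: "h \<in> RH" using max_edge_props[OF lin fin _ TH] I1 unfolding h_def by auto
        have sH: "stp r i v (RH, PH) = (RH - {h}, PH(h \<mapsto> (i,v)))"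
          using TH unfolding stp_def h_def by simp
        have hg: "h \<noteq> g" using h False by auto
        have A: "\<forall>f\<in>EH. f \<notin> RG - {g} \<longrightarrow> (\<exists>p q. (PG(g \<mapsto> (i,v))) f = Some p \<and> (PH(h \<mapsto> (i,v))) f = Some q \<and> lex_le q p)"
        proof (intro ballI impI)
          fix f assume f: "f \<in> EH" "f \<notin> RG - {g}"
          show "\<exists>p q. (PG(g \<mapsto> (i,v))) f = Some p \<and> (PH(h \<mapsto> (i,v))) f = Some q \<and> lex_le q p"
          proof (cases "f = g")
            case True
            then show ?thesis using I3' f False hg by auto
          next
            case False
            then have "f \<notin> RG" "f \<noteq> h" using f h I1 by auto
            then show ?thesis using I2 f False by auto
          qed
        qed
        have B: "\<forall>f\<in>EH. f \<notin> RH - {h} \<longrightarrow> (\<exists>q. (PH(h \<mapsto> (i,v))) f = Some q \<and> lex_le q (i,v))"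
          using I3' lex_le_refl by auto
        have C1: "RG - {g} \<subseteq> E" "RH - {h} \<subseteq> RG - {g}" "RH - {h} \<subseteq> EH" using I1 False by blast+
        show ?thesis unfolding sG sH Inv_def fst_conv snd_conv using C1 A B by blast
      next
        case FH: False
        have sH: "stp r i v (RH, PH) = (RH, PH)" using FH unfolding stp_def by simp
        have A: "\<forall>f\<in>EH. f \<notin> RG - {g} \<longrightarrow> (\<exists>p q. (PG(g \<mapsto> (i,v))) f = Some p \<and> PH f = Some q \<and> lex_le q p)"
        proof (intro ballI impI)
          fix f assume f: "f \<in> EH" "f \<notin> RG - {g}"
          show "\<exists>p q. (PG(g \<mapsto> (i,v))) f = Some p \<and> PH f = Some q \<and> lex_le q p"
          proof (cases "f = g")
            case True
            then show ?thesis using I3' f False by auto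
          next
            case False
            then show ?thesis using I2 f by auto
          qed
        qed
        show ?thesis unfolding sG sH Inv_def using I1 A I3' False by auto
      qed
    qed
  qed
qed

lemma row_inv:
  assumes lin: "linear_order_on E r" and fin: "finite E" and EH: "EH \<subseteq> E"
  shows "Inv E EH c (RG, PG) (RH, PH) \<Longrightarrow> sorted vs \<Longrightarrow> \<forall>w\<in>set vs. lex_le c (i, w) \<Longrightarrow> fst c \<le> i \<Longrightarrow>
     \<exists>c'. fst c' \<le> i \<and> Inv E EH c' (ht_row r i vs RG PG) (ht_row r i vs RH PH)"
proof (induction vs arbitrary: c RG PG RH PH)
  case Nil
  then have "fst c \<le> i \<and> Inv E EH c (ht_row r i [] RG PG) (ht_row r i [] RH PH)" by simp
  then show ?case by blast
next
  case (Cons v vs)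
  obtain RG' PG' where eG: "stp r i v (RG, PG) = (RG', PG')" by force
  obtain RH' PH' where eH: "stp r i v (RH, PH) = (RH', PH')" by force
  have "Inv E EH (i, v) (RG', PG') (RH', PH')"
    using stp_inv[OF lin fin EH Cons(2), of i v] Cons(4) eG eH by auto
  moreover have "\<forall>w\<in>set vs. lex_le (i, v) (i, w)" using Cons(3) unfolding lex_le_def by auto
  ultimately obtain c' where "fst c' \<le> i" "Inv E EH c' (ht_row r i vs RG' PG') (ht_row r i vs RH' PH')"
    using Cons(1)[of "(i,v)" RG' PG' RH' PH'] Cons(3) by auto
  moreover have "ht_row r i (v # vs) RG PG = ht_row r i vs RG' PG'" by (simp only: ht_row_Cons eG prod.case)
  moreover have "ht_row r i (v # vs) RH PH = ht_row r i vs RH' PH'" by (simp only: ht_row_Cons eH prod.case)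
  ultimately show ?case by metis
qed

lemma rows_inv:
  assumes lin: "linear_order_on E r" and fin: "finite E" and EH: "EH \<subseteq> E" and s: "sorted vs"
  shows "\<exists>c. fst c \<le> n \<and> Inv E EH c (ht_rows r vs n E Map.empty) (ht_rows r vs n EH Map.empty)"
proof (induction n)
  case 0
  have "Inv E EH (0, undefined) (E, Map.empty) (EH, Map.empty)" using EH unfolding Inv_def by auto
  then show ?case by auto
next
  case (Suc n)
  then obtain c where c: "fst c \<le> n" "Inv E EH c (ht_rows r vs n E Map.empty) (ht_rows r vs n EH Map.empty)" by auto
  obtain RG PG where eG: "ht_rows r vs n E Map.empty = (RG, PG)" by force
  obtain RH PH where eH: "ht_rows r vs n EH Map.empty = (RH, PH)" by force
  have "\<forall>w\<in>set vs. lex_le c (Suc n, w)" using c(1) unfolding lex_le_def by auto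
  then obtain c' where "fst c' \<le> Suc n" "Inv E EH c' (ht_row r (Suc n) vs RG PG) (ht_row r (Suc n) vs RH PH)"
    using row_inv[OF lin fin EH, of c RG PG RH PH vs "Suc n"] c eG eH s by auto
  moreover have "ht_rows r vs (Suc n) E Map.empty = ht_row r (Suc n) vs RG PG" using eG by simp
  moreover have "ht_rows r vs (Suc n) EH Map.empty = ht_row r (Suc n) vs RH PH" using eH by simp
  ultimately show ?case by metis
qed

theorem lemma3p8:
  fixes V :: "'v::linorder set" and E EH :: "'v set set" and r :: "('v set \<times> 'v set) set"
    and e :: "'v set"
  assumes "simple_graph V E"
    and "linear_order_on E r"
    and "EH \<subseteq> E"
    and "e \<in> EH"
  shows "lex_le (ht V EH (r \<inter> (EH \<times> EH)) e) (ht V E r e)"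
proof -
  define vs where "vs = sorted_list_of_set V"
  have finV: "finite V" using assms(1) unfolding simple_graph_def by auto
  have setvs: "set vs = V" "sorted vs" using finV unfolding vs_def by auto
  have EV: "\<forall>f\<in>E. f \<subseteq> V \<and> f \<inter> V \<noteq> {}" using assms(1) unfolding simple_graph_def by auto
  have finE: "finite E"
  proof -
    have "E \<subseteq> Pow V" using EV by auto
    then show ?thesis using finite_subset finV by (metis finite_Pow_iff)
  qed
  have mE: "\<forall>f\<in>E. f \<inter> set vs \<noteq> {}" using EV setvs by auto
  have mEH: "\<forall>f\<in>EH. f \<inter> set vs \<noteq> {}" using mE assms(3) by auto
  obtain c where c: "Inv E EH c (ht_rows r vs (card E) E Map.empty) (ht_rows r vs (card E) EH Map.empty)"
    using rows_inv[OF assms(2) finE assms(3) setvs(2)] by blast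
  have dG: "fst (ht_rows r vs (card E) E Map.empty) = {}"
    using ht_rows_done[OF assms(2) finE _ mE] by simp
  have dH: "fst (ht_rows r vs (card EH) EH Map.empty) = {}"
    using ht_rows_done[OF assms(2) finE assms(3) mEH] by simp
  have cle: "card EH \<le> card E" using card_mono[OF finE assms(3)] .
  have eqH: "ht_rows r vs (card E) EH Map.empty = ht_rows r vs (card EH) EH Map.empty"
    using ht_rows_stable[OF dH cle] .
  obtain p q where pq: "snd (ht_rows r vs (card E) E Map.empty) e = Some p"
     "snd (ht_rows r vs (card E) EH Map.empty) e = Some q" "lex_le q p"
    using c dG assms(4) unfolding Inv_def by blast
  have "ht V E r e = p" unfolding ht_def vs_def[symmetric] using pq(1) by simp
  moreover have "ht V EH (r \<inter> (EH \<times> EH)) e = q"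
    unfolding ht_def vs_def[symmetric] using pq(2) eqH ht_rows_restrict[of EH EH r vs "card EH" Map.empty] by simp
  ultimately show ?thesis using pq(3) by simp
qed

end
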